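(* Let $\mathbf{Z}(\mathbf{s},t)=\{Z_1(\mathbf{s},t),\ldots,Z_p(\mathbf{s},t)\}^\top$ be a $p$-variate strictly stationary spatio-temporal random field with cross-covariance functions $C_{ij}(\mathbf{h},u)=\operatorname{cov}\{Z_i(\mathbf{s}+\mathbf{h},t+u),Z_j(\mathbf{s},t)\}$. If any two of the properties V$\mid$ST, S$\mid$VT, T$\mid$VS hold, then the remaining one also holds and the covariance is fully separable.
   Context: Separability types (each required for all $i,j\in\{1,\ldots,p\}$ and all space lags $\mathbf{h}$ and time lags $u$): V$\mid$ST: $C_{ij}(\mathbf{h},u)=\rho_1(\mathbf{h},u)C_{ij}(\mathbf{0},0)$ for some function $\rho_1$ with $\rho_1(\mathbf{0},0)=1$. S$\mid$VT: $C_{ij}(\mathbf{h},u)=\rho_2(\mathbf{h})C_{ij}(\mathbf{0},u)$ for some $\rho_2$ with $\rho_2(\mathbf{0})=1$. T$\mid$VS: $C_{ij}(\mathbf{h},u)=\rho_3(u)C_{ij}(\mathbf{h},0)$ for some $\rho_3$ with $\rho_3(0)=1$. V$\mid$S: $C_{ij}(\mathbf{h},u)=\rho_4(\mathbf{h},u)C_{ij}(\mathbf{0},u)$ for some $\rho_4$ with $\rho_4(\mathbf{0},u)=1$ for all $u$. V$\mid$T: $C_{ij}(\mathbf{h},u)=\rho_5(\mathbf{h},u)C_{ij}(\mathbf{h},0)$ for some $\rho_5$ with $\rho_5(\mathbf{h},0)=1$ for all $\mathbf{h}$. S$\mid$T: $C_{ij}(\mathbf{h},u)=\rho_{6,ij}(\mathbf{h})C_{ij}(\mathbf{0},u)$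 for some functions $\rho_{6,ij}$ with $\rho_{6,ij}(\mathbf{0})=1$. The covariance is fully separable if it satisfies all six of these separability properties. *)

theory Defs
  imports "HOL-Probability.Probability"
begin

definition random_field ::
  "'w measure \<Rightarrow> nat \<Rightarrow> (nat \<Rightarrow> 'd::euclidean_space \<Rightarrow> real \<Rightarrow> 'w \<Rightarrow> real) \<Rightarrow> bool" where
  "random_field M p Z \<longleftrightarrow> (\<forall>i\<in>{1..p}. \<forall>s t. Z i s t \<in> borel_measurable M)"

definition finite_second_moments ::
  "'w measure \<Rightarrow> nat \<Rightarrow> (nat \<Rightarrow> 'd::euclidean_space \<Rightarrow> real \<Rightarrow> 'w \<Rightarrow> real) \<Rightarrow> bool" where
  "finite_second_moments M p Z \<longleftrightarrow>
     (\<forall>i\<in>{1..p}. \<forall>s t. integrable M (\<lambda>\<omega>. (Z i s t \<omega>)\<^sup>2))"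

definition strictly_stationary ::
  "'w measure \<Rightarrow> nat \<Rightarrow> (nat \<Rightarrow> 'd::euclidean_space \<Rightarrow> real \<Rightarrow> 'w \<Rightarrow> real) \<Rightarrow> bool" where
  "strictly_stationary M p Z \<longleftrightarrow>
     (\<forall>(n::nat) (idx::nat \<Rightarrow> nat) (s::nat \<Rightarrow> 'd) (t::nat \<Rightarrow> real) (h::'d) (u::real).
        (\<forall>k<n. idx k \<in> {1..p}) \<longrightarrow>
        distr M (Pi\<^sub>M {..<n} (\<lambda>_. borel)) (\<lambda>\<omega>. \<lambda>k\<in>{..<n}. Z (idx k) (s k + h) (t k + u) \<omega>)
        = distr M (Pi\<^sub>M {..<n} (\<lambda>_. borel)) (\<lambda>\<omega>. \<lambda>k\<in>{..<n}. Z (idx k) (s k) (t k) \<omega>))"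

definition covariance :: "'w measure \<Rightarrow> ('w \<Rightarrow> real) \<Rightarrow> ('w \<Rightarrow> real) \<Rightarrow> real" where
  "covariance M X Y =
     (\<integral>\<omega>. (X \<omega> - (\<integral>\<omega>'. X \<omega>' \<partial>M)) * (Y \<omega> - (\<integral>\<omega>'. Y \<omega>' \<partial>M)) \<partial>M)"

text \<open>Cross-covariance C_ij(h,u) = cov(Z_i(s+h,t+u), Z_j(s,t)); under stationarity it
  does not depend on (s,t), so we evaluate it at s = 0, t = 0.\<close>
definition cross_cov ::
  "'w measure \<Rightarrow> (nat \<Rightarrow> 'd::euclidean_space \<Rightarrow> real \<Rightarrow> 'w \<Rightarrow> real) \<Rightarrow> nat \<Rightarrow> nat \<Rightarrow> 'd \<Rightarrow> real \<Rightarrow> real" where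
  "cross_cov M Z i j h u = covariance M (Z i h u) (Z j 0 0)"

type_synonym 'd cov_fun = "nat \<Rightarrow> nat \<Rightarrow> 'd \<Rightarrow> real \<Rightarrow> real"

definition sep_V_ST :: "nat \<Rightarrow> ('d::euclidean_space) cov_fun \<Rightarrow> bool" where
  "sep_V_ST p C \<longleftrightarrow> (\<exists>\<rho>1 :: 'd \<Rightarrow> real \<Rightarrow> real. \<rho>1 0 0 = 1 \<and>
     (\<forall>i\<in>{1..p}. \<forall>j\<in>{1..p}. \<forall>h u. C i j h u = \<rho>1 h u * C i j 0 0))"

definition sep_S_VT :: "nat \<Rightarrow> ('d::euclidean_space) cov_fun \<Rightarrow> bool" where
  "sep_S_VT p C \<longleftrightarrow> (\<exists>\<rho>2 :: 'd \<Rightarrow> real. \<rho>2 0 = 1 \<and>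
     (\<forall>i\<in>{1..p}. \<forall>j\<in>{1..p}. \<forall>h u. C i j h u = \<rho>2 h * C i j 0 u))"

definition sep_T_VS :: "nat \<Rightarrow> ('d::euclidean_space) cov_fun \<Rightarrow> bool" where
  "sep_T_VS p C \<longleftrightarrow> (\<exists>\<rho>3 :: real \<Rightarrow> real. \<rho>3 0 = 1 \<and>
     (\<forall>i\<in>{1..p}. \<forall>j\<in>{1..p}. \<forall>h u. C i j h u = \<rho>3 u * C i j h 0))"

definition sep_V_S :: "nat \<Rightarrow> ('d::euclidean_space) cov_fun \<Rightarrow> bool" where
  "sep_V_S p C \<longleftrightarrow> (\<exists>\<rho>4 :: 'd \<Rightarrow> real \<Rightarrow> real. (\<forall>u. \<rho>4 0 u = 1) \<and>
     (\<forall>i\<in>{1..p}. \<forall>j\<in>{1..p}. \<forall>h u. C i j h u = \<rho>4 h u * C i j 0 u))"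

definition sep_V_T :: "nat \<Rightarrow> ('d::euclidean_space) cov_fun \<Rightarrow> bool" where
  "sep_V_T p C \<longleftrightarrow> (\<exists>\<rho>5 :: 'd \<Rightarrow> real \<Rightarrow> real. (\<forall>h. \<rho>5 h 0 = 1) \<and>
     (\<forall>i\<in>{1..p}. \<forall>j\<in>{1..p}. \<forall>h u. C i j h u = \<rho>5 h u * C i j h 0))"

definition sep_S_T :: "nat \<Rightarrow> ('d::euclidean_space) cov_fun \<Rightarrow> bool" where
  "sep_S_T p C \<longleftrightarrow> (\<exists>\<rho>6 :: nat \<Rightarrow> nat \<Rightarrow> 'd \<Rightarrow> real.
     (\<forall>i\<in>{1..p}. \<forall>j\<in>{1..p}. \<rho>6 i j 0 = 1 \<and> (\<forall>h u. C i j h u = \<rho>6 i j h * C i j 0 u)))"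

definition fully_separable :: "nat \<Rightarrow> ('d::euclidean_space) cov_fun \<Rightarrow> bool" where
  "fully_separable p C \<longleftrightarrow> sep_V_ST p C \<and> sep_S_VT p C \<and> sep_T_VS p C \<and>
     sep_V_S p C \<and> sep_V_T p C \<and> sep_S_T p C"

end

theory Submission
  imports Defs
begin

lemma sep_main:
  fixes C :: "('d::euclidean_space) cov_fun"
  assumes "(sep_V_ST p C \<and> sep_S_VT p C) \<or> (sep_V_ST p C \<and> sep_T_VS p C)
       \<or> (sep_S_VT p C \<and> sep_T_VS p C)"
  shows "sep_S_VT p C \<and> sep_T_VS p C"
  using assms
proof (elim disjE conjE)
  assume a: "sep_V_ST p C" and b: "sep_S_VT p C"
  from a obtain r1 where r1: "r1 0 0 = 1" "\<forall>i\<in>{1..p}. \<forall>j\<in>{1..p}. \<forall>h u. C i j h u = r1 h u * C i j 0 0"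
    unfolding sep_V_ST_def by blast
  from b obtain r2 where r2: "r2 0 = 1" "\<forall>i\<in>{1..p}. \<forall>j\<in>{1..p}. \<forall>h u. C i j h u = r2 h * C i j 0 u"
    unfolding sep_S_VT_def by blast
  have "sep_T_VS p C" unfolding sep_T_VS_def
  proof (intro exI[of _ "\<lambda>u. r1 0 u"] conjI ballI allI)
    fix i j h u assume ij: "i \<in> {1..p}" "j \<in> {1..p}"
    note A = r1(2)[rule_format, OF ij] and B = r2(2)[rule_format, OF ij]
    have "C i j h u = r2 h * (r1 0 u * C i j 0 0)" using A[of 0 u] B[of h u] by simp
    moreover have "C i j h 0 = r2 h * C i j 0 0" using B[of h 0] by simp
    ultimately show "C i j h u = r1 0 u * C i j h 0" by simp
  qed (use r1 in blast)
  with b show ?thesis by simp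
next
  assume a: "sep_V_ST p C" and b: "sep_T_VS p C"
  from a obtain r1 where r1: "r1 0 0 = 1" "\<forall>i\<in>{1..p}. \<forall>j\<in>{1..p}. \<forall>h u. C i j h u = r1 h u * C i j 0 0"
    unfolding sep_V_ST_def by blast
  from b obtain r3 where r3: "r3 0 = 1" "\<forall>i\<in>{1..p}. \<forall>j\<in>{1..p}. \<forall>h u. C i j h u = r3 u * C i j h 0"
    unfolding sep_T_VS_def by blast
  have "sep_S_VT p C" unfolding sep_S_VT_def
  proof (intro exI[of _ "\<lambda>h. r1 h 0"] conjI ballI allI)
    fix i j h u assume ij: "i \<in> {1..p}" "j \<in> {1..p}"
    note A = r1(2)[rule_format, OF ij] and B = r3(2)[rule_format, OF ij]
    have "C i j h u = r3 u * (r1 h 0 * C i j 0 0)" using A[of h 0] B[of h u] by simp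
    moreover have "C i j 0 u = r3 u * C i j 0 0" using B[of 0 u] by simp
    ultimately show "C i j h u = r1 h 0 * C i j 0 u" by simp
  qed (use r1 in blast)
  with b show ?thesis by simp
qed simp

lemma sep_full:
  fixes C :: "('d::euclidean_space) cov_fun"
  assumes "sep_S_VT p C" "sep_T_VS p C"
  shows "sep_V_ST p C \<and> fully_separable p C"
proof -
  from assms(1) obtain r2 where r2: "r2 0 = 1" "\<forall>i\<in>{1..p}. \<forall>j\<in>{1..p}. \<forall>h u. C i j h u = r2 h * C i j 0 u"
    unfolding sep_S_VT_def by blast
  from assms(2) obtain r3 where r3: "r3 0 = 1" "\<forall>i\<in>{1..p}. \<forall>j\<in>{1..p}. \<forall>h u. C i j h u = r3 u * C i j h 0"
    unfolding sep_T_VS_def by blast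
  have v: "sep_V_ST p C" unfolding sep_V_ST_def
  proof (intro exI[of _ "\<lambda>h u. r2 h * r3 u"] conjI ballI allI)
    fix i j h u assume ij: "i \<in> {1..p}" "j \<in> {1..p}"
    note A = r2(2)[rule_format, OF ij] and B = r3(2)[rule_format, OF ij]
    have "C i j 0 u = r3 u * C i j 0 0" using B[of 0 u] by simp
    then show "C i j h u = r2 h * r3 u * C i j 0 0" using A[of h u] by simp
  qed (use r2(1) r3(1) in simp)
  have "sep_V_S p C" unfolding sep_V_S_def
    by (rule exI[of _ "\<lambda>h u. r2 h"]) (use r2 in blast)
  moreover have "sep_V_T p C" unfolding sep_V_T_def
    by (rule exI[of _ "\<lambda>h u. r3 u"]) (use r3 in blast)
  moreover have "sep_S_T p C" unfolding sep_S_T_def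
    by (rule exI[of _ "\<lambda>i j h. r2 h"]) (use r2 in blast)
  ultimately show ?thesis using v assms unfolding fully_separable_def by simp
qed

theorem proposition4:
  fixes M :: "'w measure" and p :: nat
    and Z :: "nat \<Rightarrow> 'd::euclidean_space \<Rightarrow> real \<Rightarrow> 'w \<Rightarrow> real"
  assumes "prob_space M"
    and "p \<ge> 1"
    and "random_field M p Z"
    and "finite_second_moments M p Z"
    and "strictly_stationary M p Z"
    and "(sep_V_ST p (cross_cov M Z) \<and> sep_S_VT p (cross_cov M Z))
       \<or> (sep_V_ST p (cross_cov M Z) \<and> sep_T_VS p (cross_cov M Z))
       \<or> (sep_S_VT p (cross_cov M Z) \<and> sep_T_VS p (cross_cov M Z))"
  shows "sep_V_ST p (cross_cov M Z) \<and> sep_S_VT p (cross_cov M Z) \<and> sep_T_VS p (cross_cov M Z)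
       \<and> fully_separable p (cross_cov M Z)"
  using sep_main[OF assms(6)] sep_full by blast

end
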